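(* Let $\bm H$ be a finite-dimensional Hilbert space, $\rho_{\rm i}$ a density operator on $\bm H$, $U$ a unitary on $\bm H$, and $\rho':=U\rho_{\rm i}U^\dagger$. Let $\{M_b\}_{b\in B}\subset L(\bm H)$ with $B$ finite and $\sum_b M_b^\dagger M_b=I$; put $E_b:=M_b^\dagger M_b$, $p(b):=\mathrm{tr}[E_b\rho']$, and for $p(b)>0$, $\rho'(b):=M_b\rho' M_b^\dagger/p(b)$. Let $I_{\rm QC}:=S(\rho')-\sum_b p(b)S(\rho'(b))$. For each $b$ let $U_b$ be a unitary on $\bm H$, $\rho_{\rm f}(b):=U_b\rho'(b)U_b^\dagger$, and let $\rho_0(b)$ be a density operator on $\bm H$. Then (all sums over $b$ with $p(b)>0$) $$-\sum_b p(b)\,\mathrm{tr}[\rho_{\rm f}(b)\ln\rho_0(b)]-S(\rho_{\rm i})=\sum_b p(b)\,S(\rho_{\rm f}(b)\|\rho_0(b))-I_{\rm QC},$$ and consequently $$-\sum_b p(b)\,\mathrm{tr}[\rho_{\rm f}(b)\ln\rho_0(b)]-S(\rho_{\rm i})\ge -I_{\rm QC}.$$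
   Context: $S(\rho):=-\mathrm{tr}[\rho\ln\rho]$ is the von Neumann entropy. The quantum relative entropy is $S(\rho\|\sigma):=\mathrm{tr}[\rho\ln\rho]-\mathrm{tr}[\rho\ln\sigma]$, set to $+\infty$ if there is $|\psi\rangle$ with $\sigma|\psi\rangle=0$ and $\langle\psi|\rho|\psi\rangle\ne0$; correspondingly $-\mathrm{tr}[\rho\ln\sigma]$ is $+\infty$ in that case and otherwise computed on the support of $\sigma$; $0\ln0=0$. *)

theory Defs
  imports "HOL-Analysis.Analysis" "HOL-Library.Extended_Real"
begin

text \<open>Finite-dimensional Hilbert space H = complex^'n (with 'n a finite index type);
  operators on H are complex matrices complex^'n^'n.\<close>

type_synonym 'n cmat = "complex^'n^'n"

definition cinner :: "complex^'n \<Rightarrow> complex^'n \<Rightarrow> complex" where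
  "cinner u v = (\<Sum>i\<in>UNIV. cnj (u$i) * v$i)"

definition adj :: "complex^'n^'n \<Rightarrow> complex^'n^'n" where
  "adj A = (\<chi> i j. cnj (A$j$i))"

definition outer :: "complex^'n \<Rightarrow> complex^'n \<Rightarrow> complex^'n^'n" where
  "outer u v = (\<chi> i j. u$i * cnj (v$j))"

definition hermitian :: "complex^'n^'n \<Rightarrow> bool" where
  "hermitian A \<longleftrightarrow> adj A = A"

definition unitary :: "complex^'n^'n \<Rightarrow> bool" where
  "unitary U \<longleftrightarrow> adj U ** U = mat 1 \<and> U ** adj U = mat 1"

definition density_op :: "complex^'n^'n \<Rightarrow> bool" where
  "density_op \<rho> \<longleftrightarrow> hermitian \<rho> \<and> (\<forall>v. 0 \<le> Re (cinner v (\<rho> *v v))) \<and> trace \<rho> = 1"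

definition spectral_decomp :: "complex^'n^'n \<Rightarrow> ('n \<Rightarrow> complex^'n) \<Rightarrow> ('n \<Rightarrow> real) \<Rightarrow> bool" where
  "spectral_decomp A w l \<longleftrightarrow>
     (\<forall>i j. cinner (w i) (w j) = (if i = j then 1 else 0)) \<and>
     (\<forall>i. A *v w i = complex_of_real (l i) *s w i)"

definition herm_fun :: "(real \<Rightarrow> real) \<Rightarrow> complex^'n^'n \<Rightarrow> complex^'n^'n" where
  "herm_fun f A = (SOME B. \<exists>w l. spectral_decomp A w l \<and>
       B = (\<Sum>i\<in>UNIV. f (l i) *\<^sub>R outer (w i) (w i)))"

text \<open>Logarithm on the support (ln 0 := 0, giving 0 ln 0 = 0).\<close>
definition ln0 :: "real \<Rightarrow> real" where
  "ln0 x = (if x = 0 then 0 else ln x)"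

definition mat_log :: "complex^'n^'n \<Rightarrow> complex^'n^'n" where
  "mat_log A = herm_fun ln0 A"

definition vN_entropy :: "complex^'n^'n \<Rightarrow> real" where
  "vN_entropy \<rho> = - Re (trace (\<rho> ** mat_log \<rho>))"

text \<open>- tr[rho ln sigma], +infinity if supp rho is not contained in supp sigma.\<close>
definition neg_tr_log :: "complex^'n^'n \<Rightarrow> complex^'n^'n \<Rightarrow> ereal" where
  "neg_tr_log \<rho> \<sigma> =
     (if \<exists>\<psi>. \<sigma> *v \<psi> = 0 \<and> cinner \<psi> (\<rho> *v \<psi>) \<noteq> 0 then PInfty
      else ereal (- Re (trace (\<rho> ** mat_log \<sigma>))))"

definition rel_entropy :: "complex^'n^'n \<Rightarrow> complex^'n^'n \<Rightarrow> ereal" where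
  "rel_entropy \<rho> \<sigma> =
     (if \<exists>\<psi>. \<sigma> *v \<psi> = 0 \<and> cinner \<psi> (\<rho> *v \<psi>) \<noteq> 0 then PInfty
      else ereal (Re (trace (\<rho> ** mat_log \<rho>)) - Re (trace (\<rho> ** mat_log \<sigma>))))"

end

theory Submission
  imports Defs
begin



lemma adj_adj[simp]: "adj (adj A) = A"
  by (simp add: adj_def vec_eq_iff)

lemma adj_mult: "adj (A ** B) = adj B ** adj A"
  by (simp add: adj_def vec_eq_iff matrix_matrix_mult_def mult.commute)

lemma adj_mat1[simp]: "adj (mat 1) = mat 1"
  by (simp add: adj_def vec_eq_iff mat_def)

lemma adj_scaleR: "adj (r *\<^sub>R A) = r *\<^sub>R adj A"
  by (simp add: adj_def vec_eq_iff)

lemma cinner_cnj: "cnj (cinner u v) = cinner v u"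
  by (simp add: cinner_def mult.commute)

lemma cinner_adj: "cinner u (A *v v) = cinner (adj A *v u) v"
  by (simp add: cinner_def adj_def matrix_vector_mult_def sum_distrib_left sum_distrib_right
      mult_ac) (rule sum.swap)

lemma cinner_scale_right[simp]: "cinner u (a *s v) = a * cinner u v"
  by (simp add: cinner_def sum_distrib_left mult_ac)

lemma cinner_scale_left[simp]: "cinner (a *s u) v = cnj a * cinner u v"
  by (simp add: cinner_def sum_distrib_left mult_ac)

lemma cinner_add_right[simp]: "cinner u (v + w) = cinner u v + cinner u w"
  by (simp add: cinner_def sum.distrib algebra_simps)

lemma cinner_add_left[simp]: "cinner (u + v) w = cinner u w + cinner v w"
  by (simp add: cinner_def sum.distrib algebra_simps)

lemma cinner_diff_right[simp]: "cinner u (v - w) = cinner u v - cinner u w"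
  by (simp add: cinner_def sum_subtractf algebra_simps)

lemma cinner_diff_left[simp]: "cinner (u - v) w = cinner u w - cinner v w"
  by (simp add: cinner_def sum_subtractf algebra_simps)

lemma cinner_zero_right[simp]: "cinner u 0 = 0" and cinner_zero_left[simp]: "cinner 0 u = 0"
  by (simp_all add: cinner_def)

lemma cinner_sum_right: "cinner u (sum f S) = (\<Sum>i\<in>S. cinner u (f i))"
  by (simp add: cinner_def sum_distrib_left sum.swap[of _ S] )

lemma cinner_sum_left: "cinner (sum f S) u = (\<Sum>i\<in>S. cinner (f i) u)"
  by (simp add: cinner_def sum_distrib_right sum.swap[of _ S] )

lemma outer_mv: "outer u v *v x = cinner v x *s u"
  by (simp add: outer_def cinner_def matrix_vector_mult_def vec_eq_iff sum_distrib_left mult_ac)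

lemma mult_outer: "X ** outer u v = outer (X *v u) v"
  by (simp add: outer_def matrix_matrix_mult_def matrix_vector_mult_def vec_eq_iff sum_distrib_right sum_distrib_left mult_ac)

lemma trace_outer: "trace (outer u v) = cinner v u"
  by (simp add: trace_def outer_def cinner_def mult.commute)

lemma trace_mult_outer: "trace (X ** outer u v) = cinner v (X *v u)"
  by (simp add: mult_outer trace_outer)

lemma trace_sum: "trace (sum f S) = (\<Sum>i\<in>S. trace (f i))"
  by (simp add: trace_def sum.swap[of _ S])

lemma trace_scaleR: "trace (r *\<^sub>R A) = of_real r * trace A"
  by (simp add: trace_def sum_distrib_left) (simp add: scaleR_conv_of_real)

lemma cinner_self_Re: "Re (cinner x x) = norm x ^ 2"
proof -
  have "Re (cinner x x) = (\<Sum>i\<in>UNIV. (cmod (x$i))^2)"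
    by (simp add: cinner_def cmod_def power2_eq_square)
  also have "\<dots> = norm x ^ 2"
    by (simp add: norm_vec_def L2_set_def sum_nonneg)
  finally show ?thesis .
qed

lemma cinner_self_real: "cinner x x = of_real (Re (cinner x x))"
  by (simp add: cinner_def complex_eq_iff mult.commute)




lemma cont_cinner_r: "continuous_on X (\<lambda>x. cinner u x)"
  unfolding cinner_def by (intro continuous_intros continuous_on_component)

lemma cont_quad: "continuous_on X (\<lambda>x. Re (cinner x (A *v x)))"
  unfolding cinner_def matrix_vector_mult_def by (intro continuous_intros continuous_on_component)

lemma mv_scale: "A *v (c *s x) = c *s (A *v (x::complex^'n))"
  by (simp add: matrix_vector_mult_def vec_eq_iff sum_distrib_left mult_ac)

definition ons :: "(complex^'n) set \<Rightarrow> bool" where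
  "ons S \<longleftrightarrow> (\<forall>u\<in>S. \<forall>v\<in>S. cinner u v = (if u = v then 1 else 0))"

lemma herm_cinner: "hermitian A \<Longrightarrow> cinner u (A *v v) = cinner (A *v u) v"
  by (metis cinner_adj hermitian_def)

lemma herm_quad_real: "hermitian A \<Longrightarrow> cinner x (A *v x) = of_real (Re (cinner x (A *v x)))"
proof -
  assume h: "hermitian A"
  have "cnj (cinner x (A *v x)) = cinner x (A *v x)"
    by (simp add: cinner_cnj herm_cinner[OF h])
  hence "Im (cinner x (A *v x)) = 0" by (metis cnj.sel(2) neg_equal_zero)
  thus ?thesis by (simp add: complex_eq_iff)
qed

lemma exists_orth:
  fixes S :: "(complex^'n) set"
  assumes "ons S" "finite S" "card S < CARD('n)"
  shows "\<exists>x. Re (cinner x x) = 1 \<and> (\<forall>v\<in>S. cinner v x = 0)"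
proof -
  have "vec.span S \<noteq> UNIV"
  proof
    assume "vec.span S = UNIV"
    hence "vec.dim (UNIV::(complex^'n) set) \<le> card S" using vec.dim_le_card[of UNIV S] assms(2) by auto
    thus False using vec_dim_card[where 'a=complex and 'n='n] assms(3) by simp
  qed
  then obtain y where y: "y \<notin> vec.span S" by auto
  define z where "z = y - (\<Sum>v\<in>S. cinner v y *s v)"
  have zorth: "cinner u z = 0" if "u \<in> S" for u
  proof -
    have "cinner u (\<Sum>v\<in>S. cinner v y *s v) = (\<Sum>v\<in>S. cinner v y * cinner u v)"
      by (simp add: cinner_sum_right)
    also have "\<dots> = (\<Sum>v\<in>S. if v = u then cinner u y else 0)"
      using assms(1) that unfolding ons_def by (intro sum.cong) auto
    also have "\<dots> = cinner u y" using that assms(2) by simp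
    finally show ?thesis by (simp add: z_def)
  qed
  have "z \<noteq> 0"
  proof
    assume "z = 0"
    hence "y = (\<Sum>v\<in>S. cinner v y *s v)" by (simp add: z_def)
    moreover have "(\<Sum>v\<in>S. cinner v y *s v) \<in> vec.span S"
      by (intro vec.span_sum vec.span_scale vec.span_base)
    ultimately show False using y by simp
  qed
  hence nz: "norm z > 0" by simp
  define x where "x = complex_of_real (1 / norm z) *s z"
  have "Re (cinner x x) = (1 / norm z) * ((1 / norm z) * Re (cinner z z))"
    by (simp add: x_def)
  also have "\<dots> = 1" using nz by (simp add: cinner_self_Re power2_eq_square)
  finally have "Re (cinner x x) = 1" .
  moreover have "\<forall>v\<in>S. cinner v x = 0" using zorth by (simp add: x_def)
  ultimately show ?thesis by blast
qed

lemma quad_expand: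
  "cinner (x + c *s y) (A *v (x + c *s y)) =
     cinner x (A *v x) + c * cinner x (A *v y) + cnj c * cinner y (A *v x) + cnj c * c * cinner y (A *v y)"
  by (simp add: matrix_vector_right_distrib mv_scale algebra_simps)

lemma exists_eig:
  fixes A :: "complex^'n^'n"
  assumes h: "hermitian A" and "ons S" "finite S" "card S < CARD('n)"
    and eigS: "\<forall>v\<in>S. \<exists>\<mu>::real. A *v v = of_real \<mu> *s v"
  shows "\<exists>x. Re (cinner x x) = 1 \<and> (\<forall>v\<in>S. cinner v x = 0) \<and> (\<exists>\<mu>::real. A *v x = of_real \<mu> *s x)"
proof -
  define K where "K = {x::complex^'n. Re (cinner x x) = 1 \<and> (\<forall>v\<in>S. cinner v x = 0)}"
  have Kne: "K \<noteq> {}" using exists_orth[OF assms(2-4)] by (auto simp: K_def)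
  have "compact K"
    unfolding compact_eq_bounded_closed
  proof
    show "bounded K" unfolding bounded_iff K_def
      by (rule exI[of _ 1]) (auto simp: cinner_self_Re power2_eq_1_iff)
    have "K = {x. Re (cinner x x) = 1} \<inter> (\<Inter>v\<in>S. {x. cinner v x = 0})"
      by (auto simp: K_def)
    moreover have "closed {x::complex^'n. Re (cinner x x) = 1}"
      by (intro closed_Collect_eq) (auto intro!: continuous_intros continuous_on_component simp: cinner_def)
    moreover have "closed {x. cinner v x = 0}" for v
      by (intro closed_Collect_eq cont_cinner_r continuous_intros)
    ultimately show "closed K" by auto
  qed
  then obtain x0 where x0: "x0 \<in> K" and mx: "\<forall>y\<in>K. Re (cinner y (A *v y)) \<le> Re (cinner x0 (A *v x0))"
    using continuous_attains_sup[OF _ Kne cont_quad] by blast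
  define lam where "lam = Re (cinner x0 (A *v x0))"
  have bound: "Re (cinner z (A *v z)) \<le> lam * Re (cinner z z)" if zS: "\<forall>v\<in>S. cinner v z = 0" for z
  proof (cases "z = 0")
    case True then show ?thesis by (simp add: matrix_vector_mult_def cinner_def)
  next
    case False
    define r where "r = norm z"
    have r: "r > 0" using False by (simp add: r_def)
    define z' where "z' = complex_of_real (1/r) *s z"
    have "Re (cinner z' z') = (1/r) * ((1/r) * Re (cinner z z))" by (simp add: z'_def)
    also have "\<dots> = 1" using r by (simp add: cinner_self_Re power2_eq_square r_def)
    finally have "z' \<in> K" using zS by (auto simp: K_def z'_def)
    hence "Re (cinner z' (A *v z')) \<le> lam" using mx by (auto simp: lam_def)
    moreover have "Re (cinner z' (A *v z')) = (1/r) * ((1/r) * Re (cinner z (A *v z)))"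
      by (simp add: z'_def mv_scale)
    ultimately have "Re (cinner z (A *v z)) \<le> lam * r^2" using r
      by (simp add: field_simps power2_eq_square)
    thus ?thesis by (simp add: cinner_self_Re r_def)
  qed
  have x0n: "Re (cinner x0 x0) = 1" and x0S: "\<forall>v\<in>S. cinner v x0 = 0" using x0 by (auto simp: K_def)
  have x0c: "cinner x0 x0 = 1" using x0n cinner_self_real[of x0] by simp
  define y where "y = A *v x0 - of_real lam *s x0"
  have Ax0: "A *v x0 = y + of_real lam *s x0" by (simp add: y_def)
  have yS: "\<forall>v\<in>S. cinner v y = 0"
  proof
    fix v assume v: "v \<in> S"
    then obtain \<mu> :: real where mu: "A *v v = of_real \<mu> *s v" using eigS by auto
    have "cinner v (A *v x0) = cinner (A *v v) x0" by (rule herm_cinner[OF h])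
    also have "\<dots> = 0" using x0S v by (simp add: mu)
    finally show "cinner v y = 0" using x0S v by (simp add: y_def)
  qed
  have x0y: "cinner x0 y = 0"
    using herm_quad_real[OF h, of x0] x0c by (simp add: y_def lam_def)
  have yx0: "cinner y x0 = 0" using x0y cinner_cnj[of x0 y] by simp
  define Y where "Y = Re (cinner y y)"
  define C where "C = Re (cinner y (A *v y))"
  have ineq: "2 * t * Y \<le> t^2 * (lam * Y - C)" for t :: real
  proof -
    define z where "z = x0 + of_real t *s y"
    have zS: "\<forall>v\<in>S. cinner v z = 0" using x0S yS by (simp add: z_def)
    have e1: "cinner x0 (A *v y) = cinner y y"
      by (simp add: herm_cinner[OF h] Ax0 x0y)
    have e2: "cinner y (A *v x0) = cinner y y"
      by (simp add: Ax0 yx0)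
    have "Re (cinner z (A *v z)) = lam + 2 * t * Y + t^2 * C"
      unfolding z_def quad_expand e1 e2 using herm_quad_real[OF h, of x0]
      by (simp add: lam_def Y_def C_def power2_eq_square algebra_simps)
    moreover have "Re (cinner z z) = 1 + t^2 * Y"
      using x0n by (simp add: z_def x0y yx0 Y_def power2_eq_square)
    ultimately show ?thesis using bound[OF zS] by (simp add: algebra_simps)
  qed
  have "Y = 0"
  proof (rule ccontr)
    assume "Y \<noteq> 0"
    hence Yp: "Y > 0" by (simp add: Y_def cinner_self_Re)
    define t where "t = Y / (\<bar>lam * Y - C\<bar> + 1)"
    have tp: "t > 0" using Yp by (simp add: t_def)
    have "2 * t * Y \<le> t * (t * (lam * Y - C))" using ineq[of t] by (simp add: power2_eq_square)
    hence "2 * Y \<le> t * (lam * Y - C)" using tp by simp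
    also have "\<dots> \<le> t * \<bar>lam * Y - C\<bar>" using tp by (intro mult_left_mono) auto
    also have "\<dots> < Y" using Yp unfolding t_def by (simp add: field_simps)
    finally show False using Yp by simp
  qed
  hence "y = 0" by (simp add: Y_def cinner_self_Re)
  hence "A *v x0 = of_real lam *s x0" by (simp add: Ax0)
  thus ?thesis using x0n x0S by blast
qed

lemma exists_onb_k:
  fixes A :: "complex^'n^'n"
  assumes h: "hermitian A"
  shows "k \<le> CARD('n) \<Longrightarrow> \<exists>S. finite S \<and> card S = k \<and> ons S \<and> (\<forall>v\<in>S. \<exists>\<mu>::real. A *v v = of_real \<mu> *s v)"
proof (induction k)
  case 0 show ?case by (rule exI[of _ "{}"]) (simp add: ons_def)
next
  case (Suc k)
  then obtain S where S: "finite S" "card S = k" "ons S" "\<forall>v\<in>S. \<exists>\<mu>::real. A *v v = of_real \<mu> *s v"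
    by auto
  obtain x where x: "Re (cinner x x) = 1" "\<forall>v\<in>S. cinner v x = 0" "\<exists>\<mu>::real. A *v x = of_real \<mu> *s x"
    using exists_eig[OF h S(3,1) _ S(4)] S(2) Suc.prems by auto
  have xx: "cinner x x = 1" using x(1) cinner_self_real[of x] by simp
  have xS: "x \<notin> S" using x xx by auto
  have xv: "cinner x v = 0" if "v \<in> S" for v using x(2) that cinner_cnj[of v x] by auto
  have "ons (insert x S)" using S(3) xx x(2) xv xS unfolding ons_def by auto
  thus ?case using S xS x(3) by (intro exI[of _ "insert x S"]) auto
qed

lemma spectral_exists:
  fixes A :: "complex^'n^'n"
  assumes "hermitian A" shows "\<exists>w l. spectral_decomp A w l"
proof -
  obtain S where S: "finite S" "card S = CARD('n)" "ons S" "\<forall>v\<in>S. \<exists>\<mu>::real. A *v v = of_real \<mu> *s v"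
    using exists_onb_k[OF assms, of "CARD('n)"] by auto
  obtain f where f: "bij_betw f (UNIV::'n set) S"
    using finite_same_card_bij[of "UNIV::'n set" S] S by auto
  define l where "l i = (SOME \<mu>::real. A *v f i = of_real \<mu> *s f i)" for i
  have fi: "f i \<in> S" for i using f by (auto simp: bij_betw_def)
  have inj: "f i = f j \<longleftrightarrow> i = j" for i j using f by (auto simp: bij_betw_def inj_on_def)
  have "A *v f i = of_real (l i) *s f i" for i
    unfolding l_def by (rule someI_ex) (use S(4) fi in auto)
  moreover have "cinner (f i) (f j) = (if i = j then 1 else 0)" for i j
    using S(3) fi inj unfolding ons_def by metis
  ultimately show ?thesis unfolding spectral_decomp_def by blast
qed




lemma mv_sum: "(sum f S) *v x = (\<Sum>i\<in>S. f i *v (x::complex^'n))"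
  by (simp add: matrix_vector_mult_def vec_eq_iff sum_component sum_distrib_right sum.swap[of _ S])

lemma mv_scaleR: "(r *\<^sub>R M) *v x = complex_of_real r *s (M *v (x::complex^'n))"
  by (simp add: matrix_vector_mult_def vec_eq_iff) (simp add: sum_distrib_left scaleR_conv_of_real mult_ac)

lemma mm_sum: "X ** (sum f S) = (\<Sum>i\<in>S. X ** f i :: complex^'n^'n)"
  by (simp add: matrix_matrix_mult_def vec_eq_iff sum_component sum_distrib_left sum.swap[of _ S])

lemma mm_scaleR: "X ** (r *\<^sub>R M) = r *\<^sub>R (X ** M :: complex^'n^'n)"
  by (simp add: matrix_matrix_mult_def vec_eq_iff) (simp add: sum_distrib_left scaleR_conv_of_real mult_ac)

lemma mm_scaleR_left: "(r *\<^sub>R X) ** M = r *\<^sub>R (X ** M :: complex^'n^'n)"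
  by (simp add: matrix_matrix_mult_def vec_eq_iff) (simp add: sum_distrib_left scaleR_conv_of_real mult_ac)

lemma sum_scale_vec: "(\<Sum>i\<in>S. (c * f i) *s (v i)) = c *s (\<Sum>i\<in>S. f i *s (v i) :: complex^'n)"
  by (simp add: vec_eq_iff sum_component sum_distrib_left mult_ac)

lemma outer_scale: "outer (complex_of_real r *s u) v = r *\<^sub>R outer u v"
  by (simp add: outer_def vec_eq_iff) (simp add: scaleR_conv_of_real)

lemma sd_complete:
  assumes "spectral_decomp A w l"
  shows "(\<Sum>i\<in>UNIV. outer (w i) (w i)) = (mat 1 :: complex^'n^'n)"
proof -
  define W :: "complex^'n^'n" where "W = (\<chi> r c. w c $ r)"
  have "adj W ** W = mat 1"
    using assms by (simp add: spectral_decomp_def W_def adj_def matrix_matrix_mult_def mat_def vec_eq_iff cinner_def)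
  hence "W ** adj W = mat 1" by (simp add: matrix_left_right_inverse)
  thus ?thesis by (simp add: W_def adj_def matrix_matrix_mult_def outer_def vec_eq_iff sum_component)
qed

lemma sd_expand:
  assumes "spectral_decomp A w l"
  shows "(\<Sum>i\<in>UNIV. cinner (w i) x *s w i) = x"
  using arg_cong[OF sd_complete[OF assms], of "\<lambda>M. M *v x"] by (simp add: mv_sum outer_mv)

lemma sd_eig_eq:
  assumes h: "hermitian A" and d: "spectral_decomp A w l" and d': "spectral_decomp A w' l'"
    and nz: "cinner (w i) (w' k) \<noteq> 0"
  shows "l i = l' k"
proof -
  have "cinner (w i) (A *v w' k) = of_real (l' k) * cinner (w i) (w' k)"
    using d' by (simp add: spectral_decomp_def)
  moreover have "cinner (w i) (A *v w' k) = of_real (l i) * cinner (w i) (w' k)"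
    using d by (simp add: herm_cinner[OF h] spectral_decomp_def)
  ultimately have "of_real (l i) = (of_real (l' k) :: complex)" using nz by simp
  thus ?thesis by simp
qed

definition sdF :: "(real \<Rightarrow> real) \<Rightarrow> ('n \<Rightarrow> complex^'n) \<Rightarrow> ('n \<Rightarrow> real) \<Rightarrow> complex^'n^'n" where
  "sdF f w l = (\<Sum>i\<in>UNIV. f (l i) *\<^sub>R outer (w i) (w i))"

lemma sdF_unique:
  assumes h: "hermitian A" and d: "spectral_decomp A w l" and d': "spectral_decomp A w' l'"
  shows "sdF f w l = sdF f w' l'"
proof -
  define X where "X = sdF f w l"
  have Xv: "X *v w' k = of_real (f (l' k)) *s w' k" for k
  proof -
    have "X *v w' k = (\<Sum>i\<in>UNIV. (of_real (f (l i)) * cinner (w i) (w' k)) *s w i)"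
      by (simp add: X_def sdF_def mv_sum mv_scaleR outer_mv)
    also have "\<dots> = (\<Sum>i\<in>UNIV. (of_real (f (l' k)) * cinner (w i) (w' k)) *s w i)"
      by (intro sum.cong refl) (metis sd_eig_eq[OF h d d'] mult_zero_right)
    also have "\<dots> = of_real (f (l' k)) *s w' k"
      by (simp add: sum_scale_vec sd_expand[OF d])
    finally show ?thesis .
  qed
  have "X = X ** mat 1" by simp
  also have "\<dots> = (\<Sum>k\<in>UNIV. X ** outer (w' k) (w' k))" by (simp add: sd_complete[OF d', symmetric] mm_sum)
  also have "\<dots> = sdF f w' l'" by (simp add: sdF_def mult_outer Xv outer_scale)
  finally show ?thesis by (simp add: X_def)
qed

lemma herm_fun_eq:
  assumes h: "hermitian A" and d: "spectral_decomp A w l"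
  shows "herm_fun f A = sdF f w l"
proof -
  have "\<exists>B. \<exists>w l. spectral_decomp A w l \<and> B = (\<Sum>i\<in>UNIV. f (l i) *\<^sub>R outer (w i) (w i))"
    using spectral_exists[OF h] by blast
  from someI_ex[OF this] obtain w' l' where "spectral_decomp A w' l'" "herm_fun f A = sdF f w' l'"
    unfolding herm_fun_def sdF_def by blast
  thus ?thesis using sdF_unique[OF h d] by simp
qed

lemma trace_sdF:
  assumes d: "spectral_decomp A w l"
  shows "trace (A ** sdF f w l) = (\<Sum>i\<in>UNIV. of_real (f (l i) * l i))"
  using d by (simp add: sdF_def mm_sum mm_scaleR trace_sum trace_scaleR trace_mult_outer spectral_decomp_def)

lemma vN_formula:
  assumes h: "hermitian A" and d: "spectral_decomp A w l"
  shows "vN_entropy A = - (\<Sum>i\<in>UNIV. ln0 (l i) * l i)"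
  unfolding vN_entropy_def mat_log_def herm_fun_eq[OF h d] trace_sdF[OF d]
  by (simp add: Re_sum)

lemma unitary_cinner: "unitary U \<Longrightarrow> cinner (U *v u) (U *v v) = cinner u v"
  by (simp add: cinner_adj matrix_vector_mul_assoc unitary_def)

lemma herm_conj: "hermitian A \<Longrightarrow> hermitian (U ** A ** adj U)"
  by (simp add: hermitian_def adj_mult matrix_mul_assoc)

lemma sd_unitary:
  assumes d: "spectral_decomp A w l" and u: "unitary U"
  shows "spectral_decomp (U ** A ** adj U) (\<lambda>i. U *v w i) l"
proof -
  have "(U ** A ** adj U) *v (U *v w i) = U *v (A *v w i)" for i
    using u by (simp add: matrix_vector_mul_assoc[symmetric] unitary_def)
       (simp add: matrix_vector_mul_assoc matrix_mul_assoc[symmetric])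
  thus ?thesis using d u by (simp add: spectral_decomp_def unitary_cinner mv_scale)
qed

lemma vN_unitary:
  assumes h: "hermitian A" and u: "unitary U"
  shows "vN_entropy (U ** A ** adj U) = vN_entropy A"
proof -
  obtain w l where d: "spectral_decomp A w l" using spectral_exists[OF h] by blast
  show ?thesis using vN_formula[OF h d] vN_formula[OF herm_conj[OF h] sd_unitary[OF d u]] by simp
qed




lemma sd_nonneg:
  assumes "density_op \<rho>" "spectral_decomp \<rho> w l" shows "l i \<ge> 0"
proof -
  have "cinner (w i) (\<rho> *v w i) = of_real (l i)" using assms(2) by (simp add: spectral_decomp_def)
  thus ?thesis using assms(1) unfolding density_op_def by (metis Re_complex_of_real)
qed

lemma trace_sdF_gen: "trace (X ** sdF f b q) = (\<Sum>j\<in>UNIV. of_real (f (q j)) * cinner (b j) (X *v b j))"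
  by (simp add: sdF_def mm_sum mm_scaleR trace_sum trace_scaleR trace_mult_outer)

lemma sd_rep:
  assumes d: "spectral_decomp A w l"
  shows "A = (\<Sum>i\<in>UNIV. l i *\<^sub>R outer (w i) (w i))"
proof -
  have "A = A ** mat 1" by simp
  also have "\<dots> = (\<Sum>i\<in>UNIV. A ** outer (w i) (w i))" by (simp add: sd_complete[OF d, symmetric] mm_sum)
  also have "\<dots> = (\<Sum>i\<in>UNIV. l i *\<^sub>R outer (w i) (w i))"
    using d by (simp add: spectral_decomp_def mult_outer outer_scale)
  finally show ?thesis .
qed

lemma sd_trace:
  assumes d: "spectral_decomp A w l"
  shows "trace A = (\<Sum>i\<in>UNIV. of_real (l i))"
  by (subst sd_rep[OF d]) (use d in \<open>simp add: trace_sum trace_scaleR trace_outer spectral_decomp_def\<close>)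

lemma cin_sq: "cinner u v * cinner v u = complex_of_real ((cmod (cinner u v))^2)"
proof -
  have "cinner v u = cnj (cinner u v)" by (simp add: cinner_cnj)
  thus ?thesis using complex_norm_square[of "cinner u v"] by simp
qed

lemma quad_sd:
  assumes d: "spectral_decomp A w l"
  shows "cinner v (A *v v) = (\<Sum>i\<in>UNIV. of_real (l i * (cmod (cinner (w i) v))^2))"
proof -
  have "cinner v (A *v v) = (\<Sum>i\<in>UNIV. of_real (l i) * (cinner (w i) v * cinner v (w i)))"
    by (subst sd_rep[OF d]) (simp add: mv_sum mv_scaleR outer_mv cinner_sum_right mult.assoc)
  also have "\<dots> = (\<Sum>i\<in>UNIV. of_real (l i * (cmod (cinner (w i) v))^2))"
    by (intro sum.cong refl) (simp add: cin_sq)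
  finally show ?thesis .
qed

lemma parseval:
  assumes d: "spectral_decomp A w l"
  shows "(\<Sum>i\<in>UNIV. (cmod (cinner (w i) x))^2) = Re (cinner x x)"
proof -
  have "cinner x x = cinner x (\<Sum>i\<in>UNIV. cinner (w i) x *s w i)" by (simp add: sd_expand[OF d])
  also have "\<dots> = (\<Sum>i\<in>UNIV. of_real ((cmod (cinner (w i) x))^2))"
    by (simp add: cinner_sum_right cin_sq)
  finally show ?thesis by (simp add: Re_sum)
qed

lemma term_ineq:
  fixes P p q :: real
  assumes "P \<ge> 0" "p \<ge> 0" "q \<ge> 0" "p * P \<noteq> 0 \<Longrightarrow> q > 0"
  shows "P * (p - q) \<le> P * p * (ln0 p - ln0 q)"
proof (cases "P = 0 \<or> p = 0")
  case True
  thus ?thesis using assms by (auto simp: ln0_def)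
next
  case False
  hence Pp: "P > 0" "p > 0" "q > 0" using assms by auto
  have "ln (q / p) \<le> q / p - 1" using Pp by (intro ln_le_minus_one) auto
  hence "ln q - ln p \<le> q / p - 1" using Pp by (simp add: ln_div)
  hence "p * (ln q - ln p) \<le> q - p" using Pp by (simp add: field_simps)
  hence "p - q \<le> p * (ln p - ln q)" by (simp add: algebra_simps)
  hence "P * (p - q) \<le> P * (p * (ln p - ln q))" using Pp by (intro mult_left_mono) auto
  thus ?thesis using Pp by (simp add: ln0_def mult.assoc)
qed

lemma klein:
  fixes \<rho> \<sigma> :: "complex^'n^'n"
  assumes r: "density_op \<rho>" and s: "density_op \<sigma>"
  shows "rel_entropy \<rho> \<sigma> \<ge> 0"
proof (cases "\<exists>\<psi>. \<sigma> *v \<psi> = 0 \<and> cinner \<psi> (\<rho> *v \<psi>) \<noteq> 0")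
  case True thus ?thesis by (simp add: rel_entropy_def)
next
  case False
  have hr: "hermitian \<rho>" and hs: "hermitian \<sigma>" using r s by (auto simp: density_op_def)
  obtain a p where da: "spectral_decomp \<rho> a p" using spectral_exists[OF hr] by blast
  obtain b q where db: "spectral_decomp \<sigma> b q" using spectral_exists[OF hs] by blast
  define P where "P i j = (cmod (cinner (a i) (b j)))^2" for i j
  have P0: "P i j \<ge> 0" for i j by (simp add: P_def)
  have p0: "p i \<ge> 0" for i by (rule sd_nonneg[OF r da])
  have q0: "q j \<ge> 0" for j by (rule sd_nonneg[OF s db])
  have aa: "cinner (a i) (a i) = 1" for i using da by (simp add: spectral_decomp_def)
  have bb: "cinner (b i) (b i) = 1" for i using db by (simp add: spectral_decomp_def)
  have row: "(\<Sum>j\<in>UNIV. P i j) = 1" for i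
  proof -
    have "(\<Sum>j\<in>UNIV. P i j) = (\<Sum>j\<in>UNIV. (cmod (cinner (b j) (a i)))^2)"
      unfolding P_def by (intro sum.cong refl) (metis cinner_cnj complex_mod_cnj)
    thus ?thesis using parseval[OF db, of "a i"] aa by simp
  qed
  have col: "(\<Sum>i\<in>UNIV. P i j) = 1" for j
    using parseval[OF da, of "b j"] bb by (simp add: P_def)
  have sp: "(\<Sum>i\<in>UNIV. p i) = 1"
  proof -
    have "complex_of_real (\<Sum>i\<in>UNIV. p i) = 1" using sd_trace[OF da] r by (simp add: density_op_def)
    thus ?thesis by (simp only: of_real_eq_1_iff)
  qed
  have sq: "(\<Sum>j\<in>UNIV. q j) = 1"
  proof -
    have "complex_of_real (\<Sum>i\<in>UNIV. q i) = 1" using sd_trace[OF db] s by (simp add: density_op_def)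
    thus ?thesis by (simp only: of_real_eq_1_iff)
  qed
  have rb: "Re (cinner (b j) (\<rho> *v b j)) = (\<Sum>i\<in>UNIV. p i * P i j)" for j
    by (simp add: quad_sd[OF da] Re_sum P_def)
  have supp: "q j > 0" if "p i * P i j \<noteq> 0" for i j
  proof (rule ccontr)
    assume "\<not> q j > 0"
    hence "q j = 0" using q0[of j] by simp
    hence "\<sigma> *v b j = 0" using db by (simp add: spectral_decomp_def)
    hence "cinner (b j) (\<rho> *v b j) = 0" using False by blast
    hence "(\<Sum>i\<in>UNIV. p i * P i j) = 0" using rb[of j] by simp
    hence "\<forall>i\<in>UNIV. p i * P i j = 0"
      by (subst sum_nonneg_eq_0_iff[symmetric]) (auto intro: mult_nonneg_nonneg p0 P0)
    thus False using that by simp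
  qed
  have t1: "Re (trace (\<rho> ** mat_log \<rho>)) = (\<Sum>i\<in>UNIV. \<Sum>j\<in>UNIV. P i j * p i * ln0 (p i))"
  proof -
    have "(\<Sum>i\<in>UNIV. \<Sum>j\<in>UNIV. P i j * p i * ln0 (p i)) = (\<Sum>i\<in>UNIV. (\<Sum>j\<in>UNIV. P i j) * (p i * ln0 (p i)))"
      by (simp add: sum_distrib_right mult.assoc)
    also have "\<dots> = (\<Sum>i\<in>UNIV. ln0 (p i) * p i)" by (simp add: row mult.commute)
    finally show ?thesis
      unfolding mat_log_def herm_fun_eq[OF hr da] trace_sdF[OF da] by (simp add: Re_sum)
  qed
  have t2: "Re (trace (\<rho> ** mat_log \<sigma>)) = (\<Sum>i\<in>UNIV. \<Sum>j\<in>UNIV. P i j * p i * ln0 (q j))"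
  proof -
    have "Re (trace (\<rho> ** mat_log \<sigma>)) = (\<Sum>j\<in>UNIV. ln0 (q j) * (\<Sum>i\<in>UNIV. p i * P i j))"
      unfolding mat_log_def herm_fun_eq[OF hs db] trace_sdF_gen
      by (simp add: Re_sum rb)
    also have "\<dots> = (\<Sum>i\<in>UNIV. \<Sum>j\<in>UNIV. P i j * p i * ln0 (q j))"
      unfolding sum_distrib_left by (subst sum.swap) (simp add: mult_ac)
    finally show ?thesis .
  qed
  have "(\<Sum>i\<in>UNIV. \<Sum>j\<in>UNIV. P i j * (p i - q j)) \<le>
        (\<Sum>i\<in>UNIV. \<Sum>j\<in>UNIV. P i j * p i * (ln0 (p i) - ln0 (q j)))"
    by (intro sum_mono) (rule term_ineq[OF P0 p0 q0], erule supp)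
  moreover have "(\<Sum>i\<in>UNIV. \<Sum>j\<in>UNIV. P i j * (p i - q j)) = 0"
  proof -
    have e1: "(\<Sum>i\<in>UNIV. \<Sum>j\<in>UNIV. P i j * p i) = 1"
    proof -
      have "(\<Sum>i\<in>UNIV. \<Sum>j\<in>UNIV. P i j * p i) = (\<Sum>i\<in>UNIV. (\<Sum>j\<in>UNIV. P i j) * p i)"
        by (simp add: sum_distrib_right)
      thus ?thesis by (simp add: row sp)
    qed
    have e2: "(\<Sum>i\<in>UNIV. \<Sum>j\<in>UNIV. P i j * q j) = 1"
    proof -
      have "(\<Sum>i\<in>UNIV. \<Sum>j\<in>UNIV. P i j * q j) = (\<Sum>j\<in>UNIV. \<Sum>i\<in>UNIV. P i j * q j)"
        by (rule sum.swap)
      also have "\<dots> = (\<Sum>j\<in>UNIV. (\<Sum>i\<in>UNIV. P i j) * q j)"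
        by (simp add: sum_distrib_right)
      finally show ?thesis by (simp add: col sq)
    qed
    have "(\<Sum>i\<in>UNIV. \<Sum>j\<in>UNIV. P i j * (p i - q j)) =
          (\<Sum>i\<in>UNIV. \<Sum>j\<in>UNIV. P i j * p i) - (\<Sum>i\<in>UNIV. \<Sum>j\<in>UNIV. P i j * q j)"
      by (simp add: right_diff_distrib sum_subtractf)
    thus ?thesis using e1 e2 by simp
  qed
  moreover have "(\<Sum>i\<in>UNIV. \<Sum>j\<in>UNIV. P i j * p i * (ln0 (p i) - ln0 (q j))) =
      Re (trace (\<rho> ** mat_log \<rho>)) - Re (trace (\<rho> ** mat_log \<sigma>))"
    by (simp add: t1 t2 right_diff_distrib sum_subtractf)
  ultimately have "0 \<le> Re (trace (\<rho> ** mat_log \<rho>)) - Re (trace (\<rho> ** mat_log \<sigma>))"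
    by linarith
  moreover have "rel_entropy \<rho> \<sigma> = ereal (Re (trace (\<rho> ** mat_log \<rho>)) - Re (trace (\<rho> ** mat_log \<sigma>)))"
    unfolding rel_entropy_def by (rule if_not_P[OF False])
  ultimately show ?thesis by simp
qed




definition posop :: "complex^'n^'n \<Rightarrow> bool" where
  "posop X \<longleftrightarrow> (\<forall>v. 0 \<le> Re (cinner v (X *v v)))"

lemma posop_conj: "posop X \<Longrightarrow> posop (V ** X ** adj V)"
  unfolding posop_def
  by (metis cinner_adj adj_adj matrix_vector_mul_assoc)

lemma posop_scale: "posop X \<Longrightarrow> r \<ge> 0 \<Longrightarrow> posop (r *\<^sub>R X)"
  unfolding posop_def by (simp add: mv_scaleR)

lemma herm_scale: "hermitian X \<Longrightarrow> hermitian (r *\<^sub>R X)"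
  by (simp add: hermitian_def adj_scaleR)

lemma herm_trace_real: "hermitian X \<Longrightarrow> trace X = of_real (Re (trace X))"
proof -
  assume h: "hermitian X"
  have "X$i$i = cnj (X$i$i)" for i using h unfolding hermitian_def adj_def
    by (metis vec_lambda_beta)
  hence "Im (X$i$i) = 0" for i by (metis cnj.sel(2) neg_equal_zero)
  hence "Im (trace X) = 0" by (simp add: trace_def Im_sum)
  thus ?thesis by (simp add: complex_eq_iff)
qed

lemma trace_unitary_conj: "unitary V \<Longrightarrow> trace (V ** Y ** adj V) = trace Y"
proof -
  assume u: "unitary V"
  have "trace (V ** Y ** adj V) = trace (adj V ** (V ** Y))" by (rule trace_mul_sym)
  also have "\<dots> = trace Y" using u by (simp add: matrix_mul_assoc unitary_def)
  finally show ?thesis .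
qed

lemma main:
  fixes \<rho>i U :: "complex^'n^'n"
    and B :: "'b set"
    and M Ub \<rho>0 :: "'b \<Rightarrow> complex^'n^'n"
  assumes di: "density_op \<rho>i"
    and uU: "unitary U"
    and fB: "finite B"
    and uUb: "\<forall>b\<in>B. unitary (Ub b)"
    and d0: "\<forall>b\<in>B. density_op (\<rho>0 b)"
    and r'_def: "\<rho>' = U ** \<rho>i ** adj U"
    and p_def: "p = (\<lambda>b. Re (trace ((adj (M b) ** M b) ** \<rho>')))"
    and rb_def: "\<rho>'b = (\<lambda>b. (1 / p b) *\<^sub>R (M b ** \<rho>' ** adj (M b)))"
    and Bp_def: "Bp = {b\<in>B. p b > 0}"
    and I_def: "I_QC = vN_entropy \<rho>' - (\<Sum>b\<in>Bp. p b * vN_entropy (\<rho>'b b))"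
    and rf_def: "\<rho>f = (\<lambda>b. Ub b ** \<rho>'b b ** adj (Ub b))"
  shows "((\<Sum>b\<in>Bp. ereal (p b) * neg_tr_log (\<rho>f b) (\<rho>0 b)) - ereal (vN_entropy \<rho>i)
           = (\<Sum>b\<in>Bp. ereal (p b) * rel_entropy (\<rho>f b) (\<rho>0 b)) - ereal I_QC)
      \<and> ((\<Sum>b\<in>Bp. ereal (p b) * neg_tr_log (\<rho>f b) (\<rho>0 b)) - ereal (vN_entropy \<rho>i)
           \<ge> - ereal I_QC)"
proof -
  have hi: "hermitian \<rho>i" and pi: "posop \<rho>i" using di by (auto simp: density_op_def posop_def)
  have h': "hermitian \<rho>'" unfolding r'_def by (rule herm_conj[OF hi])
  have p': "posop \<rho>'" unfolding r'_def by (rule posop_conj[OF pi])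
  have S': "vN_entropy \<rho>' = vN_entropy \<rho>i" unfolding r'_def by (rule vN_unitary[OF hi uU])
  have fBp: "finite Bp" using fB by (simp add: Bp_def)
  have hb: "hermitian (\<rho>'b b)" for b
    unfolding rb_def by (intro herm_scale herm_conj h')
  have hf: "hermitian (\<rho>f b)" for b unfolding rf_def by (intro herm_conj hb)
  have Sf: "vN_entropy (\<rho>f b) = vN_entropy (\<rho>'b b)" if "b \<in> B" for b
    unfolding rf_def using vN_unitary[OF hb, of "Ub b" b] uUb that by simp
  have df: "density_op (\<rho>f b)" if b: "b \<in> Bp" for b
  proof -
    have pb: "p b > 0" "b \<in> B" using b by (auto simp: Bp_def)
    have "posop (\<rho>f b)" unfolding rf_def rb_def
      using pb by (intro posop_conj posop_scale p') auto
    moreover have "trace (\<rho>f b) = 1"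
    proof -
      have "trace (\<rho>f b) = trace (\<rho>'b b)" unfolding rf_def using uUb pb by (simp add: trace_unitary_conj)
      also have "\<dots> = of_real (1 / p b) * trace (M b ** \<rho>' ** adj (M b))"
        by (simp add: rb_def trace_scaleR)
      also have "trace (M b ** \<rho>' ** adj (M b)) = of_real (p b)"
      proof -
        have "trace (M b ** \<rho>' ** adj (M b)) = trace ((adj (M b) ** M b) ** \<rho>')"
          by (metis trace_mul_sym matrix_mul_assoc)
        moreover have "trace (M b ** \<rho>' ** adj (M b)) = of_real (Re (trace (M b ** \<rho>' ** adj (M b))))"
          by (rule herm_trace_real[OF herm_conj[OF h']])
        ultimately show ?thesis by (simp add: p_def)
      qed
      finally show ?thesis using pb by simp
    qed
    ultimately show ?thesis using hf by (simp add: density_op_def posop_def)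
  qed
  define R where "R b = rel_entropy (\<rho>f b) (\<rho>0 b)" for b
  define N where "N b = neg_tr_log (\<rho>f b) (\<rho>0 b)" for b
  have R0: "R b \<ge> 0" if "b \<in> Bp" for b
    unfolding R_def using klein[OF df[OF that]] d0 that by (auto simp: Bp_def)
  have NR: "ereal (p b) * N b = ereal (p b) * R b + ereal (p b * vN_entropy (\<rho>'b b))" if b: "b \<in> Bp" for b
  proof -
    have pb: "p b > 0" "b \<in> B" using b by (auto simp: Bp_def)
    show ?thesis
    proof (cases "\<exists>\<psi>. \<rho>0 b *v \<psi> = 0 \<and> cinner \<psi> (\<rho>f b *v \<psi>) \<noteq> 0")
      case True
      thus ?thesis using pb by (simp add: N_def R_def neg_tr_log_def rel_entropy_def)
    next
      case False
      hence "N b = ereal (- Re (trace (\<rho>f b ** mat_log (\<rho>0 b))))"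
            "R b = ereal (Re (trace (\<rho>f b ** mat_log (\<rho>f b))) - Re (trace (\<rho>f b ** mat_log (\<rho>0 b))))"
        unfolding N_def R_def neg_tr_log_def rel_entropy_def by (simp_all only: if_False)
      moreover have "vN_entropy (\<rho>'b b) = - Re (trace (\<rho>f b ** mat_log (\<rho>f b)))"
        using Sf[OF pb(2)] by (simp add: vN_entropy_def)
      ultimately show ?thesis by (simp add: algebra_simps)
    qed
  qed
  define X where "X = (\<Sum>b\<in>Bp. ereal (p b) * R b)"
  define T where "T = (\<Sum>b\<in>Bp. p b * vN_entropy (\<rho>'b b))"
  have X0: "X \<ge> 0" unfolding X_def
    by (intro sum_nonneg) (use R0 in \<open>auto simp: Bp_def intro!: mult_nonneg_nonneg\<close>)
  have LHS: "(\<Sum>b\<in>Bp. ereal (p b) * N b) = X + ereal T"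
    unfolding X_def T_def by (simp add: NR sum.distrib)
  have I': "I_QC = vN_entropy \<rho>i - T" by (simp add: I_def T_def S')
  show ?thesis
    unfolding N_def[symmetric] R_def[symmetric] X_def[symmetric] LHS I'
    using X0 by (cases X) auto
qed


theorem theorem6p1:
  fixes \<rho>i U :: "complex^'n^'n"
    and B :: "'b set"
    and M Ub \<rho>0 :: "'b \<Rightarrow> complex^'n^'n"
  assumes "density_op \<rho>i"
    and "unitary U"
    and "finite B"
    and "(\<Sum>b\<in>B. adj (M b) ** M b) = mat 1"
    and "\<forall>b\<in>B. unitary (Ub b)"
    and "\<forall>b\<in>B. density_op (\<rho>0 b)"
  shows
    "let \<rho>' = U ** \<rho>i ** adj U;
         E = (\<lambda>b. adj (M b) ** M b);
         p = (\<lambda>b. Re (trace (E b ** \<rho>')));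
         \<rho>'b = (\<lambda>b. (1 / p b) *\<^sub>R (M b ** \<rho>' ** adj (M b)));
         Bp = {b\<in>B. p b > 0};
         I_QC = vN_entropy \<rho>' - (\<Sum>b\<in>Bp. p b * vN_entropy (\<rho>'b b));
         \<rho>f = (\<lambda>b. Ub b ** \<rho>'b b ** adj (Ub b))
     in ((\<Sum>b\<in>Bp. ereal (p b) * neg_tr_log (\<rho>f b) (\<rho>0 b)) - ereal (vN_entropy \<rho>i)
           = (\<Sum>b\<in>Bp. ereal (p b) * rel_entropy (\<rho>f b) (\<rho>0 b)) - ereal I_QC)
      \<and> ((\<Sum>b\<in>Bp. ereal (p b) * neg_tr_log (\<rho>f b) (\<rho>0 b)) - ereal (vN_entropy \<rho>i)
           \<ge> - ereal I_QC)"
  unfolding Let_def by (rule main[OF assms(1,2,3,5,6) refl refl refl refl refl refl])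

end
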